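(* Let $d\in\mathbb{N}$, $0<s,p<\infty$ with $sp\neq d$ (no restriction $s<1$). Let $\mathbb{Z}_+=\{0,1,2,\ldots\}$ and $\|x\|_\infty=\max_i|x_i|$. Then: \begin{enumerate} \item If $sp<d$ and $d-sp\ge\delta>0$, there is a constant $c=c(s,p,\delta)<\infty$ such that \[\sum_{j\in\mathbb{Z}_+^d\setminus\{0\}}\frac{|u(j)|^p}{\|j\|_\infty^{sp}}\le c\sum_{j\in\mathbb{Z}_+^d\setminus\{0\}}\ \sum_{\substack{m\in\mathbb{Z}_+^d\setminus\{0\}\\ m\ne j}}\frac{|u(j)-u(m)|^p}{\|j-m\|_\infty^{sp+d}}\] for all $u:\mathbb{Z}_+^d\to\mathbb{C}$ for which the left side is finite. \item If $sp=d$ and $\varepsilon>0$, there is a constant $c=c(d,s,p,\varepsilon)<\infty$ such that \[\sum_{j\in\mathbb{Z}_+^d\setminus\{0\}}\frac{|u(j)|^p}{\|j\|_\infty^{sp+\varepsilon}}\le c\sum_{j\in\mathbb{Z}_+^d}\ \sum_{\substack{m\in\mathbb{Z}_+^d\\ m\ne j}}\frac{|u(j)-u(m)|^p}{\|j-m\|_\infty^{sp+d+\varepsilon}}\le c\sum_{j\in\mathbb{Z}_+^d}\ \sum_{\substack{m\in\mathbb{Z}_+^d\\ m\ne j}}\frac{|u(j)-u(m)|^p}{\|j-m\|_\infty^{sp+d}}\] for all $u:\mathbb{Z}_+^d\to\mathbb{C}$ with $u(0)=0$. \item If $sp>d$, there is a constant $c=c(d,s,p)<\infty$ such that \[\sum_{j\in\mathbb{Z}_+^d\setminus\{0\}}\frac{|u(j)|^p}{\|j\|_\infty^{sp}}\le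 c\sum_{j\in\mathbb{Z}_+^d}\ \sum_{\substack{m\in\mathbb{Z}_+^d\\ m\ne j}}\frac{|u(j)-u(m)|^p}{\|j-m\|_\infty^{sp+d}}\] for all $u:\mathbb{Z}_+^d\to\mathbb{C}$ with $u(0)=0$. \item All three statements above also hold with $\mathbb{Z}_+^d$ replaced by $\mathbb{Z}^d$ throughout (with possibly bigger constants). \end{enumerate} *)

theory Defs
  imports "HOL-Analysis.Analysis"
begin

text \<open>Points of Z^d are represented as functions nat \<Rightarrow> int vanishing outside {..<d}.\<close>

definition Zfull :: "nat \<Rightarrow> (nat \<Rightarrow> int) set" where
  "Zfull d = {j. \<forall>i\<ge>d. j i = 0}"

definition Zplus :: "nat \<Rightarrow> (nat \<Rightarrow> int) set" where
  "Zplus d = {j. (\<forall>i\<ge>d. j i = 0) \<and> (\<forall>i. 0 \<le> j i)}"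

definition zpt :: "nat \<Rightarrow> int" where
  "zpt = (\<lambda>_. 0)"

definition supnorm :: "nat \<Rightarrow> (nat \<Rightarrow> int) \<Rightarrow> real" where
  "supnorm d j = real_of_int (MAX i\<in>{..<d}. \<bar>j i\<bar>)"

definition hardy_lhs :: "(nat \<Rightarrow> int) set \<Rightarrow> nat \<Rightarrow> real \<Rightarrow> real \<Rightarrow> ((nat \<Rightarrow> int) \<Rightarrow> complex) \<Rightarrow> ennreal" where
  "hardy_lhs A d p q u =
     (\<integral>\<^sup>+ j. ennreal (cmod (u j) powr p / supnorm d j powr q) \<partial>count_space (A - {zpt}))"

definition hardy_rhs :: "(nat \<Rightarrow> int) set \<Rightarrow> nat \<Rightarrow> real \<Rightarrow> real \<Rightarrow> ((nat \<Rightarrow> int) \<Rightarrow> complex) \<Rightarrow> ennreal" where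
  "hardy_rhs A d p q u =
     (\<integral>\<^sup>+ j. (\<integral>\<^sup>+ m. ennreal (cmod (u j - u m) powr p / supnorm d (\<lambda>i. j i - m i) powr q)
        \<partial>count_space (A - {j})) \<partial>count_space A)"

definition hardy_parts :: "(nat \<Rightarrow> (nat \<Rightarrow> int) set) \<Rightarrow> bool" where
  "hardy_parts D \<longleftrightarrow>
    \<comment> \<open>(1) sp < d, d - sp \<ge> \<delta> > 0; constant depends only on s, p, \<delta>\<close>
    (\<forall>s p \<delta>::real. 0 < s \<longrightarrow> 0 < p \<longrightarrow> 0 < \<delta> \<longrightarrow>
       (\<exists>c::real. \<forall>d::nat. 1 \<le> d \<longrightarrow> s * p < real d \<longrightarrow> real d - s * p \<ge> \<delta> \<longrightarrow>
          (\<forall>u. hardy_lhs (D d) d p (s * p) u < \<infinity> \<longrightarrow>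
             hardy_lhs (D d) d p (s * p) u
               \<le> ennreal c * hardy_rhs (D d - {zpt}) d p (s * p + real d) u)))
  \<and>
    \<comment> \<open>(2) sp = d, \<epsilon> > 0; constant depends on d, s, p, \<epsilon>\<close>
    (\<forall>d::nat. \<forall>s p \<epsilon>::real. 1 \<le> d \<longrightarrow> 0 < s \<longrightarrow> 0 < p \<longrightarrow> s * p = real d \<longrightarrow> 0 < \<epsilon> \<longrightarrow>
       (\<exists>c::real. \<forall>u. u zpt = 0 \<longrightarrow>
          hardy_lhs (D d) d p (s * p + \<epsilon>) u
            \<le> ennreal c * hardy_rhs (D d) d p (s * p + real d + \<epsilon>) u
        \<and> ennreal c * hardy_rhs (D d) d p (s * p + real d + \<epsilon>) u
            \<le> ennreal c * hardy_rhs (D d) d p (s * p + real d) u))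
  \<and>
    \<comment> \<open>(3) sp > d; constant depends on d, s, p\<close>
    (\<forall>d::nat. \<forall>s p::real. 1 \<le> d \<longrightarrow> 0 < s \<longrightarrow> 0 < p \<longrightarrow> s * p > real d \<longrightarrow>
       (\<exists>c::real. \<forall>u. u zpt = 0 \<longrightarrow>
          hardy_lhs (D d) d p (s * p) u
            \<le> ennreal c * hardy_rhs (D d) d p (s * p + real d) u))"

end

theory Submission
  imports Defs
begin



definition mx :: "nat \<Rightarrow> (nat \<Rightarrow> int) \<Rightarrow> int" where
  "mx d j = (MAX i\<in>{..<d}. \<bar>j i\<bar>)"

lemma supnorm_mx: "supnorm d j = real_of_int (mx d j)"
  by (simp add: supnorm_def mx_def)

lemma mx_ge: "i < d \<Longrightarrow> \<bar>j i\<bar> \<le> mx d j"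
  unfolding mx_def by (rule Max_ge) auto

lemma dne: "1 \<le> (d::nat) \<Longrightarrow> {..<d} \<noteq> {}"
proof -
  assume "1 \<le> d" hence "(0::nat) \<in> {..<d}" by simp
  thus ?thesis by blast
qed

lemma mx_le_iff: "1 \<le> d \<Longrightarrow> mx d j \<le> c \<longleftrightarrow> (\<forall>i<d. \<bar>j i\<bar> \<le> c)"
proof -
  assume "1 \<le> d" hence ne: "{..<d} \<noteq> {}" by (rule dne)
  show ?thesis unfolding mx_def using ne by (subst Max_le_iff) auto
qed

lemma mx_nonneg: "1 \<le> d \<Longrightarrow> 0 \<le> mx d j"
  using mx_ge[of 0 d j] by simp

lemma mx_attained: "1 \<le> d \<Longrightarrow> \<exists>i<d. \<bar>j i\<bar> = mx d j"
proof -
  assume "1 \<le> d" hence ne: "{..<d} \<noteq> {}" by (rule dne)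
  hence "mx d j \<in> (\<lambda>i. \<bar>j i\<bar>) ` {..<d}" unfolding mx_def by (intro Max_in) auto
  thus ?thesis by auto
qed

lemma mx_zero_iff: "1 \<le> d \<Longrightarrow> j \<in> Zfull d \<Longrightarrow> mx d j = 0 \<longleftrightarrow> j = zpt"
proof
  assume d: "1 \<le> d" and j: "j \<in> Zfull d" and "mx d j = 0"
  hence "\<forall>i<d. \<bar>j i\<bar> \<le> 0" using mx_le_iff[OF d, of j 0] by simp
  hence "\<forall>i<d. j i = 0" by simp
  thus "j = zpt" using j unfolding Zfull_def zpt_def
    apply (intro ext) subgoal for x by (cases "d \<le> x") auto done
next
  assume d: "1 \<le> d" and "j = zpt"
  thus "mx d j = 0" using mx_le_iff[OF d, of j 0] mx_nonneg[OF d, of j] by (auto simp: zpt_def)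
qed

lemma mx_diff_pos: "1 \<le> d \<Longrightarrow> j \<in> Zfull d \<Longrightarrow> m \<in> Zfull d \<Longrightarrow> j \<noteq> m \<Longrightarrow> 1 \<le> mx d (\<lambda>i. j i - m i)"
proof (rule ccontr)
  assume d: "1 \<le> d" and j: "j \<in> Zfull d" and m: "m \<in> Zfull d" and ne: "j \<noteq> m"
    and "\<not> 1 \<le> mx d (\<lambda>i. j i - m i)"
  hence "mx d (\<lambda>i. j i - m i) \<le> 0" by simp
  hence "\<forall>i<d. j i = m i" using mx_le_iff[OF d] by fastforce
  moreover have "\<forall>i\<ge>d. j i = m i" using j m by (auto simp: Zfull_def)
  ultimately have "j = m" apply (intro ext) subgoal for x by (cases "d \<le> x") auto done
  thus False using ne by simp
qed

lemma Zplus_sub: "Zplus d \<subseteq> Zfull d" by (auto simp: Zplus_def Zfull_def)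
lemma zpt_Zfull: "zpt \<in> Zfull d" by (auto simp: Zfull_def zpt_def)
lemma zpt_Zplus: "zpt \<in> Zplus d" by (auto simp: Zplus_def zpt_def)

lemma card_box:
  assumes "finite S"
  shows "finite {j::nat\<Rightarrow>int. (\<forall>i\<ge>d. j i = 0) \<and> (\<forall>i<d. j i \<in> S)}"
    "card {j::nat\<Rightarrow>int. (\<forall>i\<ge>d. j i = 0) \<and> (\<forall>i<d. j i \<in> S)} = card S ^ d"
proof -
  let ?E = "\<lambda>f i. if i < d then f i else (0::int)"
  have eq: "{j::nat\<Rightarrow>int. (\<forall>i\<ge>d. j i = 0) \<and> (\<forall>i<d. j i \<in> S)} = ?E ` (PiE {..<d} (\<lambda>_. S))"
  proof (intro equalityI subsetI)
    fix j assume "j \<in> {j::nat\<Rightarrow>int. (\<forall>i\<ge>d. j i = 0) \<and> (\<forall>i<d. j i \<in> S)}"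
    hence j: "\<forall>i\<ge>d. j i = 0" "\<forall>i<d. j i \<in> S" by auto
    have "j = ?E (restrict j {..<d})" using j by (auto intro!: ext)
    moreover have "restrict j {..<d} \<in> PiE {..<d} (\<lambda>_. S)" using j by auto
    ultimately show "j \<in> ?E ` (PiE {..<d} (\<lambda>_. S))" by blast
  qed (auto simp: PiE_def Pi_def)
  have inj: "inj_on ?E (PiE {..<d} (\<lambda>_. S))"
  proof (rule inj_onI)
    fix f g assume f: "f \<in> PiE {..<d} (\<lambda>_. S)" and g: "g \<in> PiE {..<d} (\<lambda>_. S)" and e: "?E f = ?E g"
    show "f = g"
    proof (rule ext)
      fix i show "f i = g i"
      proof (cases "i < d")
        case True thus ?thesis using fun_cong[OF e, of i] by simp
      next
        case False thus ?thesis using f g by (auto simp: PiE_def extensional_def)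
      qed
    qed
  qed
  show "finite {j::nat\<Rightarrow>int. (\<forall>i\<ge>d. j i = 0) \<and> (\<forall>i<d. j i \<in> S)}"
    unfolding eq using assms by (intro finite_imageI finite_PiE) auto
  show "card {j::nat\<Rightarrow>int. (\<forall>i\<ge>d. j i = 0) \<and> (\<forall>i<d. j i \<in> S)} = card S ^ d"
    unfolding eq using inj by (simp add: card_image card_PiE)
qed


lemma nn_count_mono:
  "B \<subseteq> C \<Longrightarrow> (\<integral>\<^sup>+x. f x \<partial>count_space B) \<le> (\<integral>\<^sup>+x. f x \<partial>count_space C)"
  apply (subst (1 2) nn_integral_count_space_indicator, simp, simp)
  by (intro nn_integral_mono) (auto simp: indicator_def)
lemma nn_count_if:
  "T \<subseteq> J \<Longrightarrow> (\<integral>\<^sup>+x. (if x \<in> T then f x else 0) \<partial>count_space J) = (\<integral>\<^sup>+x. f x \<partial>count_space T)"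
  apply (subst (1 2) nn_integral_count_space_indicator, simp, simp)
  by (intro nn_integral_cong) (auto simp: indicator_def)

lemma powr_sum_le:
  fixes x y p :: real
  assumes "0 \<le> x" "0 \<le> y" "0 < p"
  shows "(x + y) powr p \<le> 2 powr p * (x powr p + y powr p)"
proof -
  have "(x + y) powr p \<le> (2 * max x y) powr p"
    using assms by (intro powr_mono2) auto
  also have "\<dots> = 2 powr p * max x y powr p"
    using assms by (simp add: powr_mult)
  also have "max x y powr p \<le> x powr p + y powr p"
    by (cases "x \<le> y") (auto simp: max_def)
  hence "2 powr p * max x y powr p \<le> 2 powr p * (x powr p + y powr p)"
    by (intro mult_left_mono) auto
  finally show ?thesis .
qed

lemma cmod_powr_split:
  fixes a b :: complex
  assumes "0 < p"
  shows "cmod a powr p \<le> 2 powr p * (cmod (a - b) powr p + cmod b powr p)"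
proof -
  have "cmod a \<le> cmod (a - b) + cmod b"
    by (metis diff_add_cancel norm_triangle_ineq)
  hence "cmod a powr p \<le> (cmod (a - b) + cmod b) powr p"
    using assms by (intro powr_mono2) auto
  also have "\<dots> \<le> 2 powr p * (cmod (a - b) powr p + cmod b powr p)"
    using assms by (intro powr_sum_le) auto
  finally show ?thesis .
qed

lemma absorb:
  fixes u :: "'a \<Rightarrow> complex" and W :: "'a \<Rightarrow> real" and Kd :: "'a \<Rightarrow> 'a \<Rightarrow> real"
    and T :: "'a \<Rightarrow> 'a set"
  assumes cI: "countable I" and IJ: "I \<subseteq> J" and p: "0 < p" and A: "0 \<le> A" and th: "0 \<le> \<theta>"
  and W: "\<And>j. j \<in> I \<Longrightarrow> 0 < W j"
  and Kd: "\<And>j m. j \<in> I \<Longrightarrow> m \<in> J \<Longrightarrow> m \<noteq> j \<Longrightarrow> 0 < Kd j m"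
  and T: "\<And>j. j \<in> I \<Longrightarrow> finite (T j) \<and> T j \<noteq> {} \<and> T j \<subseteq> J"
  and A1: "\<And>j m. j \<in> I \<Longrightarrow> m \<in> T j \<Longrightarrow> m \<noteq> j \<Longrightarrow> Kd j m \<le> A * (W j * card (T j))"
  and A2: "\<And>m. m \<in> J \<Longrightarrow> ennreal (cmod (u m) powr p) *
      (\<integral>\<^sup>+ j. (if m \<in> T j then ennreal (1 / (W j * card (T j))) else 0) \<partial>count_space I)
      \<le> ennreal \<theta> * (if m \<in> I then ennreal (cmod (u m) powr p / W m) else 0)"
  shows "(\<integral>\<^sup>+ j. ennreal (cmod (u j) powr p / W j) \<partial>count_space I)
     \<le> ennreal (2 powr p * A) * (\<integral>\<^sup>+ j. (\<integral>\<^sup>+ m. ennreal (cmod (u j - u m) powr p / Kd j m)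
            \<partial>count_space (J - {j})) \<partial>count_space I)
       + ennreal (2 powr p * \<theta>) * (\<integral>\<^sup>+ j. ennreal (cmod (u j) powr p / W j) \<partial>count_space I)"
proof -
  define R where "R j = (\<integral>\<^sup>+ m. ennreal (cmod (u j - u m) powr p / Kd j m) \<partial>count_space (J - {j}))" for j
  define F where "F j m = (if m \<in> T j then ennreal (cmod (u m) powr p / (W j * card (T j))) else 0)" for j m
  have P: "ennreal (cmod (u j) powr p / W j) \<le> ennreal (2 powr p * A) * R j
      + ennreal (2 powr p) * (\<integral>\<^sup>+ m. F j m \<partial>count_space J)" if j: "j \<in> I" for j
  proof -
    obtain fin: "finite (T j)" and ne: "T j \<noteq> {}" and sub: "T j \<subseteq> J" using T[OF j] by auto
    define c where "c = real (card (T j))"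
    have c: "0 < c" using fin ne by (simp add: c_def card_gt_0_iff)
    have Wj: "0 < W j" using W[OF j] .
    have "cmod (u j) powr p / W j = (\<Sum>m\<in>T j. cmod (u j) powr p / (W j * c))"
      using c Wj by (simp add: c_def)
    also have "\<dots> \<le> (\<Sum>m\<in>T j. 2 powr p * (cmod (u j - u m) powr p / (W j * c))
                              + 2 powr p * (cmod (u m) powr p / (W j * c)))"
    proof (intro sum_mono)
      fix m assume "m \<in> T j"
      have "cmod (u j) powr p \<le> 2 powr p * (cmod (u j - u m) powr p + cmod (u m) powr p)"
        using cmod_powr_split[OF p] .
      hence "cmod (u j) powr p / (W j * c) \<le> 2 powr p * (cmod (u j - u m) powr p + cmod (u m) powr p) / (W j * c)"
        using c Wj by (intro divide_right_mono) auto
      thus "cmod (u j) powr p / (W j * c) \<le> 2 powr p * (cmod (u j - u m) powr p / (W j * c))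
                              + 2 powr p * (cmod (u m) powr p / (W j * c))"
        by (simp add: add_divide_distrib algebra_simps)
    qed
    also have "\<dots> = 2 powr p * (\<Sum>m\<in>T j. cmod (u j - u m) powr p / (W j * c))
                   + 2 powr p * (\<Sum>m\<in>T j. cmod (u m) powr p / (W j * c))"
      by (simp add: sum.distrib sum_distrib_left)
    finally have r1: "cmod (u j) powr p / W j \<le> 2 powr p * (\<Sum>m\<in>T j. cmod (u j - u m) powr p / (W j * c))
                   + 2 powr p * (\<Sum>m\<in>T j. cmod (u m) powr p / (W j * c))" .
    have "(\<Sum>m\<in>T j. cmod (u j - u m) powr p / (W j * c))
         = (\<Sum>m\<in>T j - {j}. cmod (u j - u m) powr p / (W j * c))"
      using fin by (simp add: sum_diff1)
    also have "\<dots> \<le> (\<Sum>m\<in>T j - {j}. A * (cmod (u j - u m) powr p / Kd j m))"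
    proof (intro sum_mono)
      fix m assume m: "m \<in> T j - {j}"
      have K0: "0 < Kd j m" using Kd[OF j] m sub by auto
      have KA: "Kd j m \<le> A * (W j * c)" using A1[OF j] m by (auto simp: c_def)
      have "1 / (W j * c) \<le> A / Kd j m"
        using K0 KA c Wj by (simp add: divide_simps mult.commute)
      hence "cmod (u j - u m) powr p * (1 / (W j * c)) \<le> cmod (u j - u m) powr p * (A / Kd j m)"
        by (intro mult_left_mono) auto
      thus "cmod (u j - u m) powr p / (W j * c) \<le> A * (cmod (u j - u m) powr p / Kd j m)"
        by (simp add: mult.commute)
    qed
    also have "\<dots> = A * (\<Sum>m\<in>T j - {j}. cmod (u j - u m) powr p / Kd j m)"
      by (simp add: sum_distrib_left)
    finally have r2: "(\<Sum>m\<in>T j. cmod (u j - u m) powr p / (W j * c))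
        \<le> A * (\<Sum>m\<in>T j - {j}. cmod (u j - u m) powr p / Kd j m)" .
    have nn1: "\<And>m. m \<in> T j - {j} \<Longrightarrow> 0 \<le> cmod (u j - u m) powr p / Kd j m"
      using Kd[OF j] sub by (auto intro!: divide_nonneg_pos)
    have nn2: "\<And>m. 0 \<le> cmod (u m) powr p / (W j * c)" using c Wj by auto
    have e1: "ennreal (\<Sum>m\<in>T j - {j}. cmod (u j - u m) powr p / Kd j m) \<le> R j"
    proof -
      have "ennreal (\<Sum>m\<in>T j - {j}. cmod (u j - u m) powr p / Kd j m)
          = (\<Sum>m\<in>T j - {j}. ennreal (cmod (u j - u m) powr p / Kd j m))"
        using nn1 by (intro sum_ennreal[symmetric]) auto
      also have "\<dots> = (\<integral>\<^sup>+ m. ennreal (cmod (u j - u m) powr p / Kd j m) \<partial>count_space (T j - {j}))"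
        using fin by (simp add: nn_integral_count_space_finite)
      also have "\<dots> \<le> R j" unfolding R_def using sub by (intro nn_count_mono) auto
      finally show ?thesis .
    qed
    have e2: "ennreal (\<Sum>m\<in>T j. cmod (u m) powr p / (W j * c)) = (\<integral>\<^sup>+ m. F j m \<partial>count_space J)"
    proof -
      have "ennreal (\<Sum>m\<in>T j. cmod (u m) powr p / (W j * c))
          = (\<Sum>m\<in>T j. ennreal (cmod (u m) powr p / (W j * c)))"
        using nn2 by (intro sum_ennreal[symmetric]) auto
      also have "\<dots> = (\<integral>\<^sup>+ m. ennreal (cmod (u m) powr p / (W j * c)) \<partial>count_space (T j))"
        using fin by (simp add: nn_integral_count_space_finite)
      also have "\<dots> = (\<integral>\<^sup>+ m. F j m \<partial>count_space J)"
        unfolding F_def c_def using nn_count_if[OF sub] by simp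
      finally show ?thesis .
    qed
    have "ennreal (cmod (u j) powr p / W j)
        \<le> ennreal (2 powr p * (A * (\<Sum>m\<in>T j - {j}. cmod (u j - u m) powr p / Kd j m))
                  + 2 powr p * (\<Sum>m\<in>T j. cmod (u m) powr p / (W j * c)))"
    proof (intro ennreal_leI)
      have "2 powr p * (\<Sum>m\<in>T j. cmod (u j - u m) powr p / (W j * c))
         \<le> 2 powr p * (A * (\<Sum>m\<in>T j - {j}. cmod (u j - u m) powr p / Kd j m))"
        by (rule mult_left_mono[OF r2]) simp
      thus "cmod (u j) powr p / W j
        \<le> 2 powr p * (A * (\<Sum>m\<in>T j - {j}. cmod (u j - u m) powr p / Kd j m))
                  + 2 powr p * (\<Sum>m\<in>T j. cmod (u m) powr p / (W j * c))" using r1 by linarith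
    qed
    also have "\<dots> = ennreal (2 powr p * A) * ennreal (\<Sum>m\<in>T j - {j}. cmod (u j - u m) powr p / Kd j m)
         + ennreal (2 powr p) * ennreal (\<Sum>m\<in>T j. cmod (u m) powr p / (W j * c))"
    proof -
      have s1: "0 \<le> (\<Sum>m\<in>T j - {j}. cmod (u j - u m) powr p / Kd j m)" using nn1 by (rule sum_nonneg)
      have s2: "0 \<le> (\<Sum>m\<in>T j. cmod (u m) powr p / (W j * c))" using nn2 by (intro sum_nonneg) auto
      show ?thesis using s1 s2 A
        by (subst ennreal_plus) (auto simp: ennreal_mult[symmetric] mult.assoc)
    qed
    also have "\<dots> \<le> ennreal (2 powr p * A) * R j + ennreal (2 powr p) * (\<integral>\<^sup>+ m. F j m \<partial>count_space J)"
      using e1 e2 by (intro add_mono mult_left_mono) auto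
    finally show ?thesis .
  qed
  have "(\<integral>\<^sup>+ j. ennreal (cmod (u j) powr p / W j) \<partial>count_space I)
      \<le> (\<integral>\<^sup>+ j. ennreal (2 powr p * A) * R j
          + ennreal (2 powr p) * (\<integral>\<^sup>+ m. F j m \<partial>count_space J) \<partial>count_space I)"
    using P by (intro nn_integral_mono) auto
  also have "\<dots> = ennreal (2 powr p * A) * (\<integral>\<^sup>+ j. R j \<partial>count_space I)
      + ennreal (2 powr p) * (\<integral>\<^sup>+ j. (\<integral>\<^sup>+ m. F j m \<partial>count_space J) \<partial>count_space I)"
    by (simp add: nn_integral_add nn_integral_cmult)
  also have "(\<integral>\<^sup>+ j. (\<integral>\<^sup>+ m. F j m \<partial>count_space J) \<partial>count_space I)
      = (\<integral>\<^sup>+ m. (\<integral>\<^sup>+ j. F j m \<partial>count_space I) \<partial>count_space J)"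
    using cI by (intro nn_integral_count_space_nn_integral[symmetric]) auto
  also have "\<dots> \<le> (\<integral>\<^sup>+ m. ennreal \<theta> * (if m \<in> I then ennreal (cmod (u m) powr p / W m) else 0) \<partial>count_space J)"
  proof (intro nn_integral_mono)
    fix m assume m: "m \<in> space (count_space J)"
    have "(\<integral>\<^sup>+ j. F j m \<partial>count_space I) = (\<integral>\<^sup>+ j. ennreal (cmod (u m) powr p) *
       (if m \<in> T j then ennreal (1 / (W j * card (T j))) else 0) \<partial>count_space I)"
    proof (intro nn_integral_cong)
      fix j assume j: "j \<in> space (count_space I)"
      have "0 \<le> 1 / (W j * card (T j))" using W[of j] j by auto
      thus "F j m = ennreal (cmod (u m) powr p) * (if m \<in> T j then ennreal (1 / (W j * card (T j))) else 0)"
        unfolding F_def by (auto simp: ennreal_mult'[symmetric])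
    qed
    also have "\<dots> = ennreal (cmod (u m) powr p) *
      (\<integral>\<^sup>+ j. (if m \<in> T j then ennreal (1 / (W j * card (T j))) else 0) \<partial>count_space I)"
      by (simp add: nn_integral_cmult)
    also have "\<dots> \<le> ennreal \<theta> * (if m \<in> I then ennreal (cmod (u m) powr p / W m) else 0)"
      using A2 m by simp
    finally show "(\<integral>\<^sup>+ j. F j m \<partial>count_space I)
        \<le> ennreal \<theta> * (if m \<in> I then ennreal (cmod (u m) powr p / W m) else 0)" .
  qed
  also have "\<dots> = ennreal \<theta> * (\<integral>\<^sup>+ m. ennreal (cmod (u m) powr p / W m) \<partial>count_space I)"
    by (simp add: nn_integral_cmult nn_count_if[OF IJ])
  finally show ?thesis unfolding R_def
    by (simp add: ennreal_mult' mult.assoc mult_left_mono add_mono th)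
qed

definition nn :: "nat \<Rightarrow> (nat \<Rightarrow> int) \<Rightarrow> nat" where "nn d j = nat (mx d j)"

lemma supnorm_nn: "1 \<le> d \<Longrightarrow> supnorm d j = real (nn d j)"
  using mx_nonneg[of d j] unfolding supnorm_mx nn_def by simp

lemma nn_le_iff: "1 \<le> d \<Longrightarrow> nn d j \<le> q \<longleftrightarrow> (\<forall>i<d. \<bar>j i\<bar> \<le> int q)"
proof -
  assume d: "1 \<le> d"
  have "nn d j \<le> q \<longleftrightarrow> mx d j \<le> int q" unfolding nn_def using mx_nonneg[OF d, of j] by linarith
  thus ?thesis using mx_le_iff[OF d, of j "int q"] by simp
qed

lemma nn_ge: "i < d \<Longrightarrow> \<bar>j i\<bar> \<le> int (nn d j)"
  using mx_ge[of i d j] unfolding nn_def by linarith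


lemma nat_h1: "nat (2 * int q + 1) = Suc (2*q)" by arith
lemma nat_h2: "nat (int q + 1) = Suc q" by arith

definition good :: "nat \<Rightarrow> (nat \<Rightarrow> int) set \<Rightarrow> bool" where
  "good d L \<longleftrightarrow> L \<subseteq> Zfull d \<and> zpt \<in> L \<and>
    (\<forall>q. finite {m\<in>L. nn d m \<le> q} \<and> (q+1)^d \<le> card {m\<in>L. nn d m \<le> q}) \<and>
    (\<forall>n\<ge>1. card {m\<in>L. nn d m = n} \<le> 2*d*(3*n)^(d-1)) \<and>
    (\<forall>j\<in>L. \<forall>K::nat. \<exists>T. T \<subseteq> L \<and> finite T \<and> card T = (K+1)^d \<and>
        (\<forall>m\<in>T. nn d j \<le> nn d m \<and> nn d m \<le> nn d j + K \<and> nn d (\<lambda>i. j i - m i) \<le> K))"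

lemma pow_diff_le:
  fixes x y :: real
  assumes "0 \<le> y" "y \<le> x"
  shows "x^d - y^d \<le> d * (x - y) * x^(d-1)"
proof (induction d)
  case 0 thus ?case by simp
next
  case (Suc d)
  have "x^Suc d - y^Suc d = x * (x^d - y^d) + (x - y) * y^d" by (simp add: algebra_simps)
  also have "\<dots> \<le> x * (d * (x - y) * x^(d-1)) + (x - y) * x^d"
    using Suc assms by (intro add_mono mult_left_mono power_mono) auto
  also have "\<dots> = Suc d * (x - y) * x^d"
  proof (cases d)
    case 0 thus ?thesis by simp
  next
    case (Suc e) thus ?thesis by (simp add: algebra_simps)
  qed
  finally show ?case by simp
qed

lemma ball_eq:
  assumes d: "1 \<le> d"
  shows "{m\<in>Zfull d. nn d m \<le> q} = {j. (\<forall>i\<ge>d. j i = 0) \<and> (\<forall>i<d. j i \<in> {-int q..int q})}"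
    "{m\<in>Zplus d. nn d m \<le> q} = {j. (\<forall>i\<ge>d. j i = 0) \<and> (\<forall>i<d. j i \<in> {0..int q})}"
proof -
  have a: "\<And>x::int. \<bar>x\<bar> \<le> int q \<longleftrightarrow> x \<in> {-int q..int q}" by auto
  show "{m\<in>Zfull d. nn d m \<le> q} = {j. (\<forall>i\<ge>d. j i = 0) \<and> (\<forall>i<d. j i \<in> {-int q..int q})}"
    unfolding nn_le_iff[OF d] a Zfull_def by blast
  have b: "\<And>x::int. 0 \<le> x \<Longrightarrow> \<bar>x\<bar> \<le> int q \<longleftrightarrow> x \<in> {0..int q}" by auto
  show "{m\<in>Zplus d. nn d m \<le> q} = {j. (\<forall>i\<ge>d. j i = 0) \<and> (\<forall>i<d. j i \<in> {0..int q})}"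
  proof (intro equalityI subsetI)
    fix x assume x: "x \<in> {m\<in>Zplus d. nn d m \<le> q}"
    thus "x \<in> {j. (\<forall>i\<ge>d. j i = 0) \<and> (\<forall>i<d. j i \<in> {0..int q})}"
      using nn_le_iff[OF d, of x q] by (auto simp: Zplus_def)
  next
    fix x assume x: "x \<in> {j. (\<forall>i\<ge>d. j i = 0) \<and> (\<forall>i<d. j i \<in> {0..int q})}"
    have "0 \<le> x i" for i by (cases "d \<le> i") (use x in auto)
    moreover have "nn d x \<le> q" using x nn_le_iff[OF d, of x q] by auto
    ultimately show "x \<in> {m\<in>Zplus d. nn d m \<le> q}" using x by (auto simp: Zplus_def)
  qed
qed

lemma sphere_eq:
  "1 \<le> n \<Longrightarrow> {m\<in>L. nn d m = n} = {m\<in>L. nn d m \<le> n} - {m\<in>L. nn d m \<le> n - 1}"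
  by auto

lemma sphere_card:
  assumes fin: "finite {m\<in>L. nn d m \<le> n}" and n: "1 \<le> n"
  shows "real (card {m\<in>L. nn d m = n}) = real (card {m\<in>L. nn d m \<le> n}) - real (card {m\<in>L. nn d m \<le> n - 1})"
proof -
  have sub: "{m\<in>L. nn d m \<le> n - 1} \<subseteq> {m\<in>L. nn d m \<le> n}" by auto
  have "card {m\<in>L. nn d m = n} = card {m\<in>L. nn d m \<le> n} - card {m\<in>L. nn d m \<le> n - 1}"
    unfolding sphere_eq[OF n] using fin sub by (intro card_Diff_subset) (auto intro: finite_subset)
  moreover have "card {m\<in>L. nn d m \<le> n - 1} \<le> card {m\<in>L. nn d m \<le> n}"
    using fin sub by (intro card_mono)
  ultimately show ?thesis by simp
qed

lemma good_T:
  assumes d: "1 \<le> d" and L: "L = Zfull d \<or> L = Zplus d" and j: "j \<in> L"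
  shows "\<exists>T. T \<subseteq> L \<and> finite T \<and> card T = (K+1)^d \<and>
        (\<forall>m\<in>T. nn d j \<le> nn d m \<and> nn d m \<le> nn d j + K \<and> nn d (\<lambda>i. j i - m i) \<le> K)"
proof -
  define sg where "sg i = (if j i < 0 then -1 else (1::int))" for i
  define box where "box = {t::nat\<Rightarrow>int. (\<forall>i\<ge>d. t i = 0) \<and> (\<forall>i<d. t i \<in> {0..int K})}"
  define E where "E t i = j i + sg i * t i" for t i
  have jZ: "\<forall>i\<ge>d. j i = 0" using j L by (auto simp: Zfull_def Zplus_def)
  have fb: "finite box" and cb: "card box = (K+1)^d"
    using card_box[of "{0..int K}" d] by (auto simp: box_def nat_h2)
  have inj: "inj_on E box"
  proof (rule inj_onI)
    fix s t assume "s \<in> box" "t \<in> box" "E s = E t"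
    thus "s = t" by (intro ext) (auto simp: E_def sg_def fun_eq_iff split: if_splits)
  qed
  have absE: "\<bar>E t i\<bar> = \<bar>j i\<bar> + t i" if "t \<in> box" "i < d" for t i
    using that by (auto simp: E_def sg_def box_def)
  have dE: "\<bar>j i - E t i\<bar> = t i" if "t \<in> box" "i < d" for t i
    using that by (auto simp: E_def sg_def box_def)
  have tK: "0 \<le> t i \<and> t i \<le> int K" if "t \<in> box" "i < d" for t i
    using that by (auto simp: box_def)
  show ?thesis
  proof (intro exI[of _ "E ` box"] conjI ballI)
    show "E ` box \<subseteq> L"
    proof
      fix m assume "m \<in> E ` box"
      then obtain t where t: "t \<in> box" "m = E t" by auto
      have "\<forall>i\<ge>d. m i = 0" using t jZ by (auto simp: E_def box_def)
      moreover have "L = Zplus d \<Longrightarrow> \<forall>i. 0 \<le> m i"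
      proof -
        have t0: "0 \<le> t i" for i using t(1) by (cases "d \<le> i") (auto simp: box_def)
        assume "L = Zplus d"
        hence j0: "0 \<le> j i" for i using j by (auto simp: Zplus_def)
        show ?thesis
        proof
          fix i
          have "sg i = 1" using j0[of i] by (simp add: sg_def)
          thus "0 \<le> m i" using t0[of i] j0[of i] t(2) by (simp add: E_def)
        qed
      qed
      ultimately show "m \<in> L" using L by (auto simp: Zfull_def Zplus_def)
    qed
    show "finite (E ` box)" using fb by simp
    show "card (E ` box) = (K+1)^d" using card_image[OF inj] cb by simp
    fix m assume "m \<in> E ` box"
    then obtain t where t: "t \<in> box" "m = E t" by auto
    show "nn d j \<le> nn d m"
      unfolding nn_le_iff[OF d] using absE[OF t(1)] tK[OF t(1)] nn_ge[of _ d m] t(2)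
      by (smt (verit))
    show "nn d m \<le> nn d j + K"
      unfolding nn_le_iff[OF d] using absE[OF t(1)] tK[OF t(1)] nn_ge[of _ d j] t(2)
      by (smt (verit) of_nat_add)
    show "nn d (\<lambda>i. j i - m i) \<le> K"
      unfolding nn_le_iff[OF d] using dE[OF t(1)] tK[OF t(1)] t(2) by simp
  qed
qed

lemma good_full: assumes d: "1 \<le> d" shows "good d (Zfull d)"
proof -
  have fin: "finite {m\<in>Zfull d. nn d m \<le> q}" and cq: "card {m\<in>Zfull d. nn d m \<le> q} = (2*q+1)^d" for q
    unfolding ball_eq[OF d] using card_box[of "{-int q..int q}" d] by (auto simp: nat_h1)
  have G3: "card {m\<in>Zfull d. nn d m = n} \<le> 2*d*(3*n)^(d-1)" if n: "1 \<le> n" for n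
  proof -
    have "real (card {m\<in>Zfull d. nn d m = n}) = real ((2*n+1)^d) - real ((2*(n-1)+1)^d)"
      using sphere_card[OF fin n] cq by simp
    also have "\<dots> = (2*real n+1)^d - (2*real n-1)^d" using n by (simp add: of_nat_diff add.commute)
    also have "\<dots> \<le> d * ((2*real n+1) - (2*real n-1)) * (2*real n+1)^(d-1)"
      using n by (intro pow_diff_le) auto
    also have "\<dots> = d * 2 * (2*real n+1)^(d-1)" by simp
    also have "\<dots> \<le> d * 2 * (3 * real n)^(d-1)"
      using n by (intro mult_left_mono power_mono) auto
    finally have "real (card {m\<in>Zfull d. nn d m = n}) \<le> real (2*d*(3*n)^(d-1))" by simp
    thus ?thesis by linarith
  qed
  have B: "\<forall>q. finite {m\<in>Zfull d. nn d m \<le> q} \<and> (q+1)^d \<le> card {m\<in>Zfull d. nn d m \<le> q}"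
    using fin cq by (auto intro!: power_mono)
  have C: "\<forall>j\<in>Zfull d. \<forall>K::nat. \<exists>T. T \<subseteq> Zfull d \<and> finite T \<and> card T = (K+1)^d \<and>
        (\<forall>m\<in>T. nn d j \<le> nn d m \<and> nn d m \<le> nn d j + K \<and> nn d (\<lambda>i. j i - m i) \<le> K)"
    using good_T[OF d, of "Zfull d"] by blast
  show ?thesis unfolding good_def using B C G3 zpt_Zfull by blast
qed

lemma good_plus: assumes d: "1 \<le> d" shows "good d (Zplus d)"
proof -
  have fin: "finite {m\<in>Zplus d. nn d m \<le> q}" and cq: "card {m\<in>Zplus d. nn d m \<le> q} = (q+1)^d" for q
    unfolding ball_eq[OF d] using card_box[of "{0..int q}" d] by (auto simp: nat_h2)
  have G3: "card {m\<in>Zplus d. nn d m = n} \<le> 2*d*(3*n)^(d-1)" if n: "1 \<le> n" for n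
  proof -
    have "real (card {m\<in>Zplus d. nn d m = n}) = real ((n+1)^d) - real ((n-1+1)^d)"
      using sphere_card[OF fin n] cq by simp
    also have "\<dots> = (real n+1)^d - (real n)^d" using n by (simp add: add.commute)
    also have "\<dots> \<le> d * ((real n+1) - real n) * (real n+1)^(d-1)"
      using n by (intro pow_diff_le) auto
    also have "\<dots> \<le> 2 * d * (3 * real n)^(d-1)"
      using n by (intro mult_mono power_mono) auto
    finally have "real (card {m\<in>Zplus d. nn d m = n}) \<le> real (2*d*(3*n)^(d-1))" by simp
    thus ?thesis by linarith
  qed
  have B: "\<forall>q. finite {m\<in>Zplus d. nn d m \<le> q} \<and> (q+1)^d \<le> card {m\<in>Zplus d. nn d m \<le> q}"
    using fin cq by auto
  have C: "\<forall>j\<in>Zplus d. \<forall>K::nat. \<exists>T. T \<subseteq> Zplus d \<and> finite T \<and> card T = (K+1)^d \<and>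
        (\<forall>m\<in>T. nn d j \<le> nn d m \<and> nn d m \<le> nn d j + K \<and> nn d (\<lambda>i. j i - m i) \<le> K)"
    using good_T[OF d, of "Zplus d"] by blast
  show ?thesis unfolding good_def using B C G3 zpt_Zplus Zplus_sub by blast
qed



lemma step_bound:
  fixes a :: real and n :: nat
  assumes a: "0 < a" and n: "1 \<le> n"
  shows "real n powr (-1-a) \<le> 2 powr (1+a) / a * (real n powr (-a) - real (Suc n) powr (-a))"
proof -
  have n0: "0 < real n" using n by simp
  have D: "\<forall>x. real n \<le> x \<and> x \<le> real (Suc n) \<longrightarrow> ((\<lambda>x. x powr (-a)) has_real_derivative (-a * x powr (-a-1))) (at x)"
  proof (intro allI impI)
    fix x assume "real n \<le> x \<and> x \<le> real (Suc n)"
    hence x0: "0 < x" using n0 by linarith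
    show "((\<lambda>x. x powr (-a)) has_real_derivative (-a * x powr (-a-1))) (at x)"
      using x0 by (auto intro!: derivative_eq_intros)
  qed
  obtain z where z: "real n < z" "z < real (Suc n)"
    and eq: "real (Suc n) powr (-a) - real n powr (-a) = (real (Suc n) - real n) * (-a * z powr (-a-1))"
    using MVT2[of "real n" "real (Suc n)" "\<lambda>x. x powr (-a)" "\<lambda>x. -a * x powr (-a-1)"] D by auto
  have z0: "0 < z" using z n0 by linarith
  have eq2: "real n powr (-a) - real (Suc n) powr (-a) = a * z powr (-a-1)" using eq by simp
  have "real (Suc n) \<le> 2 * real n" using n by simp
  hence "z \<le> 2 * real n" using z by linarith
  hence "(2 * real n) powr (-a-1) \<le> z powr (-a-1)"
    using z0 a by (intro powr_mono2') auto
  also have "(2 * real n) powr (-a-1) = 2 powr (-a-1) * real n powr (-1-a)"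
  proof -
    have e: "-a-1 = -1-a" by simp
    show ?thesis using n0 unfolding e by (simp add: powr_mult)
  qed
  finally have "2 powr (-a-1) * real n powr (-1-a) \<le> z powr (-a-1)" .
  hence "2 powr (1+a) * (2 powr (-a-1) * real n powr (-1-a)) \<le> 2 powr (1+a) * z powr (-a-1)"
    by (rule mult_left_mono) auto
  moreover have "2 powr (1+a) * (2 powr (-a-1) * real n powr (-1-a)) = real n powr (-1-a)"
  proof -
    have "2 powr (1+a) * 2 powr (-a-1) = (2::real) powr ((1+a) + (-a-1))" by (rule powr_add[symmetric])
    also have "\<dots> = 1" by simp
    finally show ?thesis by (simp add: mult.assoc[symmetric])
  qed
  ultimately have "real n powr (-1-a) \<le> 2 powr (1+a) * z powr (-a-1)" by simp
  also have "\<dots> = 2 powr (1+a) / a * (a * z powr (-a-1))" using a by simp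
  finally show ?thesis using eq2 by simp
qed

lemma tail_bound:
  fixes a :: real and N :: nat
  assumes a: "0 < a" and N: "1 \<le> N"
  shows "(\<Sum>n. if N \<le> n then ennreal (real n powr (-1-a)) else 0)
     \<le> ennreal (2 powr (1+a) / a * real N powr (-a))"
proof -
  define C where "C = 2 powr (1+a) / a"
  have C0: "0 < C" using a by (simp add: C_def)
  define h where "h n = (if N \<le> n then real n powr (-a) - real (Suc n) powr (-a) else 0)" for n
  have h0: "0 \<le> h n" for n
    unfolding h_def using a N by (auto intro!: powr_mono2')
  define F where "F i = real (i + N) powr (-a)" for i
  have Flim: "F \<longlonglongrightarrow> 0"
  proof -
    have "filterlim (\<lambda>i. real (i + N)) at_top sequentially"
      by (intro filterlim_subseq[THEN filterlim_compose[OF filterlim_real_sequentially]]) (auto simp: strict_mono_def)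
    thus ?thesis unfolding F_def using a by (intro tendsto_neg_powr) auto
  qed
  have "(\<lambda>i. F i - F (Suc i)) sums (F 0 - 0)" by (rule telescope_sums'[OF Flim])
  moreover have "(\<lambda>i. h (i + N)) = (\<lambda>i. F i - F (Suc i))"
    by (auto simp: h_def F_def add.commute)
  ultimately have "(\<lambda>i. h (i + N)) sums (real N powr (-a))" by (simp add: F_def)
  moreover have "(\<Sum>i<N. h i) = 0" by (simp add: h_def)
  ultimately have hs: "h sums (real N powr (-a))" using sums_iff_shift[of h N] by simp
  have "(\<Sum>n. if N \<le> n then ennreal (real n powr (-1-a)) else 0) \<le> (\<Sum>n. ennreal (C * h n))"
  proof (intro suminf_le summableI)
    fix n
    show "(if N \<le> n then ennreal (real n powr (-1-a)) else 0) \<le> ennreal (C * h n)"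
      using step_bound[OF a, of n] N by (auto simp: h_def C_def intro!: ennreal_leI)
  qed
  also have "\<dots> = ennreal (C * real N powr (-a))"
    using C0 h0 by (intro suminf_ennreal_eq sums_mult hs) auto
  finally show ?thesis by (simp add: C_def)
qed

lemma radial_sum:
  fixes g :: "nat \<Rightarrow> real"
  assumes d: "1 \<le> d" and G: "good d L" and N: "1 \<le> N" and g: "\<And>n. 0 \<le> g n"
  shows "(\<integral>\<^sup>+ j. (if N \<le> nn d j then ennreal (g (nn d j)) else 0) \<partial>count_space L)
     \<le> (\<Sum>n. if N \<le> n then ennreal (2*d*(3*n)^(d-1) * g n) else 0)"
proof -
  define c where "c n = (if N \<le> n then ennreal (g n) else 0)" for n
  have "(\<integral>\<^sup>+ j. (if N \<le> nn d j then ennreal (g (nn d j)) else 0) \<partial>count_space L)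
      = (\<integral>\<^sup>+ j. (\<Sum>n. if n = nn d j then c n else 0) \<partial>count_space L)"
  proof (intro nn_integral_cong)
    fix j
    have "(\<Sum>n. if n = nn d j then c n else 0) = c (nn d j)"
      using sums_single[of "nn d j" c] by (simp add: sums_iff)
    thus "(if N \<le> nn d j then ennreal (g (nn d j)) else 0) = (\<Sum>n. if n = nn d j then c n else 0)"
      by (simp add: c_def)
  qed
  also have "\<dots> = (\<Sum>n. \<integral>\<^sup>+ j. (if n = nn d j then c n else 0) \<partial>count_space L)"
    by (intro nn_integral_suminf) auto
  also have "\<dots> \<le> (\<Sum>n. if N \<le> n then ennreal (2*d*(3*n)^(d-1) * g n) else 0)"
  proof (intro suminf_le summableI)
    fix n
    define S where "S = {m\<in>L. nn d m = n}"
    have "finite {m\<in>L. nn d m \<le> n}" using G by (simp add: good_def)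
    hence finS: "finite S" unfolding S_def by (rule finite_subset[rotated]) auto
    have "(\<integral>\<^sup>+ j. (if n = nn d j then c n else 0) \<partial>count_space L) = (\<integral>\<^sup>+ j. c n * indicator S j \<partial>count_space L)"
      by (intro nn_integral_cong) (auto simp: S_def indicator_def)
    also have "\<dots> = c n * emeasure (count_space L) S"
      by (intro nn_integral_cmult_indicator) (auto simp: S_def)
    also have "\<dots> = c n * of_nat (card S)"
      using finS by (subst emeasure_count_space_finite) (auto simp: S_def)
    also have "\<dots> \<le> (if N \<le> n then ennreal (2*d*(3*n)^(d-1) * g n) else 0)"
    proof (cases "N \<le> n")
      case True
      hence "card S \<le> 2*d*(3*n)^(d-1)" using G N unfolding good_def S_def by auto
      hence "real (card S) \<le> real (2*d*(3*n)^(d-1))" by linarith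
      hence "g n * real (card S) \<le> g n * (2*d*(3*n)^(d-1))" using g[of n] by (intro mult_left_mono) auto
      thus ?thesis using True g[of n]
        by (auto simp: c_def ennreal_of_nat_eq_real_of_nat ennreal_mult'[symmetric] mult.commute intro!: ennreal_leI)
    qed (simp add: c_def)
    finally show "(\<integral>\<^sup>+ j. (if n = nn d j then c n else 0) \<partial>count_space L)
        \<le> (if N \<le> n then ennreal (2*d*(3*n)^(d-1) * g n) else 0)" .
  qed
  finally show ?thesis .
qed



lemma xexp_le: "0 \<le> (x::real) \<Longrightarrow> x * exp (-x) \<le> 1"
proof -
  assume "0 \<le> x"
  have "x \<le> exp x" using exp_ge_add_one_self[of x] by linarith
  thus ?thesis by (simp add: exp_minus divide_simps)
qed

lemma unifA:
  fixes a \<delta> \<theta> C :: real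
  assumes a: "0 < a" and dl: "0 < \<delta>" and th: "0 < \<theta>" and C: "0 < C"
  shows "\<exists>K::nat. 1 \<le> K \<and> (\<forall>d::nat. 1 \<le> d \<longrightarrow> real d - a \<ge> \<delta> \<longrightarrow>
     2 * real d * 3^(d-1) / real K ^ d * C * (real K + 1) powr a \<le> \<theta>)"
proof -
  define B where "B = 2/3 * C * 6 powr a"
  have B0: "0 < B" using C by (simp add: B_def)
  define L where "L = 1 + B * (1 + a) / (\<theta> * \<delta>)"
  have L1: "1 \<le> L" using B0 a th dl by (simp add: L_def)
  define K where "K = nat \<lceil>3 * exp L\<rceil>"
  have K3: "3 * exp L \<le> real K" unfolding K_def by linarith
  have "3 \<le> 3 * exp L" using L1 by simp
  hence K0: "3 \<le> real K" using K3 by linarith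
  have K1: "1 \<le> K" using K0 by linarith
  define r where "r = 3 / real K"
  have r0: "0 < r" using K0 by (simp add: r_def)
  have rL: "r \<le> exp (-L)" using K3 K0 by (simp add: r_def exp_minus divide_simps mult.commute)
  have main: "2 * real d * 3^(d-1) / real K ^ d * C * (real K + 1) powr a \<le> \<theta>"
    if d: "1 \<le> d" and dd: "real d - a \<ge> \<delta>" for d :: nat
  proof -
    define x where "x = real d - a"
    have x0: "\<delta> \<le> x" using dd by (simp add: x_def)
    have t: "3^(d-1) = (3::real)^d / 3" using d by (cases d) auto
    have "2 * real d * 3^(d-1) / real K ^ d = 2 * real d * ((3::real)^d / 3) / real K ^ d"
      by (subst t) (rule refl)
    also have "\<dots> = 2/3 * real d * r ^ d" by (simp add: r_def power_divide)
    finally have e1: "2 * real d * 3^(d-1) / real K ^ d = 2/3 * real d * r ^ d" .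
    have "r ^ d = r powr (real d)" using r0 by (simp add: powr_realpow)
    also have "\<dots> = r powr x * r powr a" unfolding x_def by (simp add: powr_add[symmetric])
    finally have e2: "r ^ d = r powr x * r powr a" .
    have "r powr a * (real K + 1) powr a = (r * (real K + 1)) powr a" using r0 by (simp add: powr_mult)
    also have "\<dots> \<le> 6 powr a"
    proof (intro powr_mono2)
      show "r * (real K + 1) \<le> 6" using K0 by (simp add: r_def divide_simps)
    qed (use a r0 in auto)
    finally have e3: "r powr a * (real K + 1) powr a \<le> 6 powr a" .
    have e4: "r powr x \<le> exp (- (L * x))"
    proof -
      have "r powr x \<le> exp (-L) powr x" using r0 rL x0 dl by (intro powr_mono2) auto
      also have "\<dots> = exp (- (L * x))" by (simp add: powr_def)
      finally show ?thesis .
    qed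
    have e5: "real d * exp (- (L * x)) \<le> (1 + a) * exp (- (\<delta> * (L - 1)))"
    proof -
      have q1: "exp (- (L * x)) = exp (-x) * exp (- ((L - 1) * x))" by (simp add: exp_add[symmetric] algebra_simps)
      have q2: "exp (- ((L - 1) * x)) \<le> exp (- (\<delta> * (L - 1)))"
        using L1 x0 by (simp add: mult_right_mono mult.commute)
      have q3: "exp (- (L * x)) \<le> exp (- ((L - 1) * x))" using x0 dl by (simp add: algebra_simps)
      have q4: "x * exp (-x) \<le> 1" using xexp_le x0 dl by simp
      have "x * exp (- (L * x)) = (x * exp (-x)) * exp (- ((L - 1) * x))" using q1 by simp
      also have "\<dots> \<le> 1 * exp (- (\<delta> * (L - 1)))"
        using q2 q4 x0 dl by (intro mult_mono) auto
      finally have h1: "x * exp (- (L * x)) \<le> exp (- (\<delta> * (L - 1)))" by simp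
      have h2: "a * exp (- (L * x)) \<le> a * exp (- (\<delta> * (L - 1)))"
        using q2 q3 a by (intro mult_left_mono) auto
      have "real d = x + a" by (simp add: x_def)
      hence "real d * exp (- (L * x)) = x * exp (- (L * x)) + a * exp (- (L * x))" by (simp add: algebra_simps)
      with h1 h2 show ?thesis by (simp add: algebra_simps)
    qed
    have e6: "B * ((1 + a) * exp (- (\<delta> * (L - 1)))) \<le> \<theta>"
    proof -
      have "\<delta> * (L - 1) = B * (1 + a) / \<theta>" using dl by (simp add: L_def)
      hence "B * (1 + a) / \<theta> \<le> exp (\<delta> * (L - 1))" using exp_ge_add_one_self[of "\<delta> * (L - 1)"] by linarith
      hence "B * (1 + a) \<le> \<theta> * exp (\<delta> * (L - 1))" using th by (simp add: divide_simps mult.commute)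
      thus ?thesis by (simp add: exp_minus divide_simps mult.assoc)
    qed
    have "2 * real d * 3^(d-1) / real K ^ d * C * (real K + 1) powr a
        = 2/3 * C * real d * r powr x * (r powr a * (real K + 1) powr a)"
      unfolding e1 e2 by (simp add: mult_ac)
    also have "\<dots> \<le> 2/3 * C * real d * r powr x * 6 powr a"
      using e3 C by (intro mult_left_mono) auto
    also have "\<dots> = B * (real d * r powr x)" by (simp add: B_def mult_ac)
    also have "\<dots> \<le> B * (real d * exp (- (L * x)))"
      using e4 B0 by (intro mult_left_mono) auto
    also have "\<dots> \<le> B * ((1 + a) * exp (- (\<delta> * (L - 1))))"
      using e5 B0 by (intro mult_left_mono) auto
    also have "\<dots> \<le> \<theta>" by (rule e6)
    finally show ?thesis .
  qed
  show ?thesis using K1 main by blast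
qed

lemma unifB:
  fixes a D0 \<theta> :: real
  assumes ad: "real d < a" and th: "0 < \<theta>" and D0: "0 < D0"
  shows "\<exists>K::nat. 1 \<le> K \<and> D0 * real K powr (real d - a) \<le> \<theta>"
proof -
  define y where "y = (\<theta> / D0) powr (1 / (real d - a))"
  have y0: "0 < y" using th D0 by (simp add: y_def)
  define K where "K = nat \<lceil>y\<rceil> + 1"
  have Ky: "y \<le> real K" unfolding K_def by linarith
  have "real K powr (real d - a) \<le> y powr (real d - a)"
    using y0 Ky ad by (intro powr_mono2') auto
  also have "\<dots> = \<theta> / D0" unfolding y_def using ad th D0 by (simp add: powr_powr)
  finally have "D0 * real K powr (real d - a) \<le> \<theta>" using D0 by (simp add: divide_simps mult.commute)
  thus ?thesis by (intro exI[of _ K]) (auto simp: K_def)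
qed



lemma half_absorb:
  fixes x y :: ennreal
  assumes "x < \<infinity>" "x \<le> y + ennreal (1/2) * x"
  shows "x \<le> 2 * y"
proof (cases "y = \<infinity>")
  case True thus ?thesis by simp
next
  case False
  obtain rx where rx: "x = ennreal rx" "0 \<le> rx" using assms(1) by (cases x) auto
  obtain ry where ry: "y = ennreal ry" "0 \<le> ry" using False by (cases y) auto
  have e1: "ennreal (1/2) * ennreal rx = ennreal (1/2 * rx)" by (rule ennreal_mult'[symmetric]) simp
  have e2: "ennreal ry + ennreal (1/2 * rx) = ennreal (ry + 1/2 * rx)" using rx ry by (intro ennreal_plus[symmetric]) auto
  have "ennreal rx \<le> ennreal (ry + 1/2 * rx)"
    using assms(2) unfolding rx(1) ry(1) e1 e2 .
  hence "rx \<le> ry + 1/2 * rx" using rx ry by (subst (asm) ennreal_le_iff) auto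
  hence "rx \<le> 2 * ry" by simp
  hence "ennreal rx \<le> ennreal (2 * ry)" by (rule ennreal_leI)
  also have "ennreal (2 * ry) = 2 * ennreal ry" using ry by (subst ennreal_mult) auto
  finally show ?thesis using rx ry by simp
qed

lemma countable_Zfull: "countable (Zfull d)"
proof -
  have "Zfull d = (\<Union>q. {m\<in>Zfull d. nn d m \<le> q})" by auto
  moreover have "finite {m\<in>Zfull d. nn d m \<le> q}" for q
  proof (cases "1 \<le> d")
    case True thus ?thesis using good_full[OF True] by (simp add: good_def)
  next
    case False
    hence "d = 0" by simp
    hence "Zfull d \<subseteq> {zpt}" by (auto simp: Zfull_def zpt_def)
    hence "{m\<in>Zfull d. nn d m \<le> q} \<subseteq> {zpt}" by blast
    thus ?thesis by (rule finite_subset) simp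
  qed
  moreover have "countable (\<Union>q. {m\<in>Zfull d. nn d m \<le> q})"
    using calculation(2) by (intro countable_UN) (auto intro: countable_finite)
  ultimately show ?thesis by simp
qed

lemma good_nn_pos: "1 \<le> d \<Longrightarrow> good d L \<Longrightarrow> j \<in> L \<Longrightarrow> j \<noteq> zpt \<Longrightarrow> 1 \<le> nn d j"
  using mx_zero_iff[of d j] mx_nonneg[of d j] by (auto simp: good_def nn_def)

lemma good_diff_pos: "1 \<le> d \<Longrightarrow> good d L \<Longrightarrow> j \<in> L \<Longrightarrow> m \<in> L \<Longrightarrow> j \<noteq> m \<Longrightarrow> 1 \<le> nn d (\<lambda>i. j i - m i)"
proof -
  assume d: "1 \<le> d" and G: "good d L" and j: "j \<in> L" and m: "m \<in> L" and ne: "j \<noteq> m"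
  have "L \<subseteq> Zfull d" using G by (simp add: good_def)
  hence "1 \<le> mx d (\<lambda>i. j i - m i)" using mx_diff_pos[OF d _ _ ne] j m by auto
  thus ?thesis by (simp add: nn_def)
qed



lemma nn_zpt: "1 \<le> d \<Longrightarrow> nn d zpt = 0"
  using mx_zero_iff[of d zpt] zpt_Zfull[of d] by (simp add: nn_def)

lemma alg1:
  fixes a :: real and n K d :: nat
  assumes n: "1 \<le> n" and d: "1 \<le> d" and K: "0 < K"
  shows "2*real d*(3*real n)^(d-1) * (1 / (real n powr a * (real K * real n)^d))
       = 2*real d*3^(d-1)/real K^d * real n powr (-1-a)"
proof -
  obtain e where e: "d = Suc e" using d by (cases d) auto
  have n0: "0 < real n" using n by simp
  have "real n powr (-1-a) = inverse (real n powr (1+a))"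
    by (subst powr_minus[symmetric]) simp
  also have "real n powr (1+a) = real n * real n powr a" using n0 by (simp add: powr_add)
  finally have pe: "real n powr (-1-a) = 1 / (real n * real n powr a)" by (simp add: divide_simps)
  show ?thesis unfolding pe e using n0 K
    by (simp add: power_mult_distrib field_simps)
qed

lemma partA:
  fixes a p \<delta> :: real
  assumes a: "0 < a" and p: "0 < p" and dl: "0 < \<delta>"
  shows "\<exists>c::real. \<forall>d L. 1 \<le> d \<longrightarrow> good d L \<longrightarrow> \<delta> \<le> real d - a \<longrightarrow>
     (\<forall>u. hardy_lhs L d p a u < \<infinity> \<longrightarrow>
        hardy_lhs L d p a u \<le> ennreal c * hardy_rhs (L - {zpt}) d p (a + real d) u)"
proof -
  define C where "C = 2 powr (1+a) / a"
  define \<theta> where "\<theta> = 1 / (2 * 2 powr p)"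
  have C0: "0 < C" using a by (simp add: C_def)
  have th0: "0 < \<theta>" by (simp add: \<theta>_def)
  obtain K :: nat where K1: "1 \<le> K" and KB: "\<And>d. 1 \<le> d \<Longrightarrow> real d - a \<ge> \<delta> \<Longrightarrow>
      2 * real d * 3^(d-1) / real K ^ d * C * (real K + 1) powr a \<le> \<theta>"
    using unifA[OF a dl th0 C0] by blast
  define A where "A = real K powr a"
  have A0: "0 \<le> A" by (simp add: A_def)
  show ?thesis
  proof (intro exI[of _ "2 * (2 powr p * A)"] allI impI)
    fix d L u
    assume d: "1 \<le> d" and G: "good d L" and dd: "\<delta> \<le> real d - a" and fin: "hardy_lhs L d p a u < \<infinity>"
    define I where "I = L - {zpt}"
    have LZ: "L \<subseteq> Zfull d" using G by (simp add: good_def)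
    have cI: "countable I" using countable_Zfull[of d] LZ unfolding I_def
      by (metis countable_subset Diff_subset order_trans)
    have G4: "\<forall>j\<in>L. \<forall>K'. \<exists>T. T \<subseteq> L \<and> finite T \<and> card T = (K'+1)^d \<and>
        (\<forall>m\<in>T. nn d j \<le> nn d m \<and> nn d m \<le> nn d j + K' \<and> nn d (\<lambda>i. j i - m i) \<le> K')"
      using G by (simp add: good_def)
    define T where "T j = (SOME T. T \<subseteq> L \<and> finite T \<and> card T = (K * nn d j+1)^d \<and>
        (\<forall>m\<in>T. nn d j \<le> nn d m \<and> nn d m \<le> nn d j + K * nn d j \<and> nn d (\<lambda>i. j i - m i) \<le> K * nn d j))" for j
    have T: "T j \<subseteq> L \<and> finite (T j) \<and> card (T j) = (K * nn d j+1)^d \<and>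
        (\<forall>m\<in>T j. nn d j \<le> nn d m \<and> nn d m \<le> nn d j + K * nn d j \<and> nn d (\<lambda>i. j i - m i) \<le> K * nn d j)"
      if "j \<in> L" for j
    proof -
      have "\<exists>T. T \<subseteq> L \<and> finite T \<and> card T = (K * nn d j+1)^d \<and>
        (\<forall>m\<in>T. nn d j \<le> nn d m \<and> nn d m \<le> nn d j + K * nn d j \<and> nn d (\<lambda>i. j i - m i) \<le> K * nn d j)"
        using G4 that by blast
      thus ?thesis unfolding T_def by (rule someI_ex)
    qed
    define W where "W j = supnorm d j powr a" for j
    define Kd where "Kd j m = supnorm d (\<lambda>i. j i - m i) powr (a + real d)" for j m
    have npos: "\<And>j. j \<in> I \<Longrightarrow> 1 \<le> nn d j" using good_nn_pos[OF d G] by (auto simp: I_def)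
    have W0: "0 < W j" if "j \<in> I" for j
      using npos[OF that] by (simp add: W_def supnorm_nn[OF d])
    have Wn: "W j = real (nn d j) powr a" for j by (simp add: W_def supnorm_nn[OF d])
    have Kd0: "0 < Kd j m" if "j \<in> I" "m \<in> I" "m \<noteq> j" for j m
      using good_diff_pos[OF d G, of j m] that by (auto simp: Kd_def supnorm_nn[OF d] I_def)
    have TI: "finite (T j) \<and> T j \<noteq> {} \<and> T j \<subseteq> I" if j: "j \<in> I" for j
    proof -
      have jL: "j \<in> L" using j by (simp add: I_def)
      have "T j \<subseteq> I"
      proof
        fix m assume m: "m \<in> T j"
        hence "1 \<le> nn d m" using T[OF jL] npos[OF j] by auto
        hence "m \<noteq> zpt" using nn_zpt[OF d] by auto
        thus "m \<in> I" using m T[OF jL] by (auto simp: I_def)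
      qed
      moreover have "T j \<noteq> {}"
      proof
        assume "T j = {}"
        hence "card (T j) = 0" by simp
        thus False using T[OF jL] by simp
      qed
      ultimately show ?thesis using T[OF jL] by blast
    qed
    have A1: "Kd j m \<le> A * (W j * card (T j))" if j: "j \<in> I" and m: "m \<in> T j" and ne: "m \<noteq> j" for j m
    proof -
      have jL: "j \<in> L" using j by (simp add: I_def)
      define n where "n = nn d j"
      have n1: "1 \<le> n" using npos[OF j] by (simp add: n_def)
      have e: "nn d (\<lambda>i. j i - m i) \<le> K * n" using T[OF jL] m by (simp add: n_def)
      have Kn: "0 < real (K * n)" using K1 n1 by simp
      have "Kd j m = real (nn d (\<lambda>i. j i - m i)) powr (a + real d)"
        by (simp add: Kd_def supnorm_nn[OF d])
      also have "\<dots> \<le> real (K * n) powr (a + real d)"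
      proof (intro powr_mono2)
        show "real (nn d (\<lambda>i. j i - m i)) \<le> real (K * n)" using e by (simp only: of_nat_le_iff)
      qed (use a in auto)
      also have "\<dots> = real K powr a * real n powr a * real (K * n) ^ d"
      proof -
        have h1: "real (K * n) powr (real d) = real (K * n) ^ d"
          using Kn by (rule powr_realpow)
        have h2: "real (K * n) powr a = real K powr a * real n powr a"
          by (simp add: powr_mult)
        show ?thesis unfolding powr_add h1 h2 ..
      qed
      also have "\<dots> \<le> real K powr a * real n powr a * real ((K * n + 1) ^ d)"
        by (intro mult_left_mono) (auto intro!: power_mono)
      also have "\<dots> = A * (W j * card (T j))"
        using T[OF jL] by (simp add: A_def Wn n_def)
      finally show ?thesis .
    qed
    have A2: "ennreal (cmod (u m) powr p) *
      (\<integral>\<^sup>+ j. (if m \<in> T j then ennreal (1 / (W j * card (T j))) else 0) \<partial>count_space I)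
      \<le> ennreal \<theta> * (if m \<in> I then ennreal (cmod (u m) powr p / W m) else 0)" if m: "m \<in> I" for m
    proof -
      define M where "M = nn d m"
      have M1: "1 \<le> M" using npos[OF m] by (simp add: M_def)
      define N where "N = nat \<lceil>real M / (real K + 1)\<rceil>"
      have "0 < real M / (real K + 1)" using M1 by simp
      hence "\<not> \<lceil>real M / (real K + 1)\<rceil> \<le> 0" by (simp add: ceiling_le_zero)
      hence N1: "1 \<le> N" unfolding N_def by linarith
      have NM: "real M / (real K + 1) \<le> real N" unfolding N_def by linarith
      define g where "g n = 1 / (real n powr a * (real K * real n)^d)" for n :: nat
      have g0: "0 \<le> g n" for n by (simp add: g_def)
      define Q where "Q = 2*real d*3^(d-1)/real K^d"
      have Q0: "0 \<le> Q" by (simp add: Q_def)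
      have "(\<integral>\<^sup>+ j. (if m \<in> T j then ennreal (1 / (W j * card (T j))) else 0) \<partial>count_space I)
          \<le> (\<integral>\<^sup>+ j. (if N \<le> nn d j then ennreal (g (nn d j)) else 0) \<partial>count_space I)"
      proof (intro nn_integral_mono)
        fix j assume "j \<in> space (count_space I)"
        hence j: "j \<in> I" by simp
        hence jL: "j \<in> L" by (simp add: I_def)
        define n where "n = nn d j"
        have n1: "1 \<le> n" using npos[OF j] by (simp add: n_def)
        show "(if m \<in> T j then ennreal (1 / (W j * card (T j))) else 0)
            \<le> (if N \<le> nn d j then ennreal (g (nn d j)) else 0)"
        proof (cases "m \<in> T j")
          case True
          have "M \<le> n + K * n" using T[OF jL] True by (simp add: M_def n_def)
          hence "real M \<le> (real K + 1) * real n" by (simp add: algebra_simps) (metis of_nat_add of_nat_le_iff of_nat_mult)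
          hence "real M / (real K + 1) \<le> real n" by (simp add: divide_simps mult.commute)
          hence Nn: "N \<le> n" unfolding N_def by (simp add: nat_le_iff ceiling_le_iff)
          have pos: "0 < real n powr a * (real K * real n)^d" using n1 K1 by simp
          have "real n powr a * (real K * real n)^d \<le> W j * card (T j)"
            using T[OF jL] by (simp add: Wn n_def) (intro mult_left_mono power_mono, auto)
          hence "1 / (W j * card (T j)) \<le> g n" unfolding g_def using pos
            by (intro divide_left_mono) auto
          thus ?thesis using True Nn by (simp add: n_def ennreal_leI)
        qed simp
      qed
      also have "\<dots> \<le> (\<integral>\<^sup>+ j. (if N \<le> nn d j then ennreal (g (nn d j)) else 0) \<partial>count_space L)"
        by (intro nn_count_mono) (auto simp: I_def)
      also have "\<dots> \<le> (\<Sum>n. if N \<le> n then ennreal (2*d*(3*n)^(d-1) * g n) else 0)"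
        by (rule radial_sum[OF d G N1 g0])
      also have "\<dots> = (\<Sum>n. ennreal Q * (if N \<le> n then ennreal (real n powr (-1-a)) else 0))"
      proof (intro suminf_cong)
        fix n
        show "(if N \<le> n then ennreal (2*d*(3*n)^(d-1) * g n) else 0)
            = ennreal Q * (if N \<le> n then ennreal (real n powr (-1-a)) else 0)"
        proof (cases "N \<le> n")
          case True
          hence "2*real d*(3*real n)^(d-1) * g n = Q * real n powr (-1-a)"
            unfolding g_def Q_def using alg1[of n d K a] N1 d K1 by simp
          thus ?thesis using True Q0 by (simp add: ennreal_mult')
        qed simp
      qed
      also have "\<dots> = ennreal Q * (\<Sum>n. if N \<le> n then ennreal (real n powr (-1-a)) else 0)"
        by (rule ennreal_suminf_cmult)
      also have "\<dots> \<le> ennreal Q * ennreal (C * real N powr (-a))"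
        using tail_bound[OF a N1] by (intro mult_left_mono) (auto simp: C_def)
      also have "\<dots> \<le> ennreal (\<theta> / W m)"
      proof -
        have Mp: "0 < real M" using M1 by simp
        have "real N powr (-a) \<le> (real M / (real K + 1)) powr (-a)"
          using NM Mp a by (intro powr_mono2') auto
        also have "\<dots> = (real K + 1) powr a / real M powr a"
          using Mp by (simp add: powr_divide powr_minus divide_simps)
        finally have "Q * (C * real N powr (-a)) \<le> Q * (C * ((real K + 1) powr a / real M powr a))"
          using Q0 C0 by (intro mult_left_mono) auto
        also have "\<dots> = (Q * C * (real K + 1) powr a) / real M powr a" by simp
        also have "\<dots> \<le> \<theta> / real M powr a"
          using KB[OF d] dd Mp unfolding Q_def by (intro divide_right_mono) auto
        finally show ?thesis using Q0 C0 by (simp add: ennreal_mult'[symmetric] Wn M_def ennreal_leI)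
      qed
      finally have int: "(\<integral>\<^sup>+ j. (if m \<in> T j then ennreal (1 / (W j * card (T j))) else 0) \<partial>count_space I)
          \<le> ennreal (\<theta> / W m)" .
      have "ennreal (cmod (u m) powr p) *
          (\<integral>\<^sup>+ j. (if m \<in> T j then ennreal (1 / (W j * card (T j))) else 0) \<partial>count_space I)
          \<le> ennreal (cmod (u m) powr p) * ennreal (\<theta> / W m)"
        using int by (rule mult_left_mono) simp
      also have "\<dots> = ennreal \<theta> * ennreal (cmod (u m) powr p / W m)"
        using th0 W0[OF m] by (simp add: ennreal_mult'[symmetric] mult.commute)
      finally show ?thesis using m by simp
    qed
    have main: "hardy_lhs L d p a u \<le> ennreal (2 powr p * A) * hardy_rhs (L - {zpt}) d p (a + real d) u
        + ennreal (2 powr p * \<theta>) * hardy_lhs L d p a u"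
      using absorb[of I I p A \<theta> W Kd T u, OF cI _ p A0 _ W0 Kd0 TI A1 A2]
      unfolding hardy_lhs_def hardy_rhs_def I_def W_def Kd_def using th0 by auto
    have h: "2 powr p * \<theta> = 1/2" by (simp add: \<theta>_def)
    have "hardy_lhs L d p a u \<le> 2 * (ennreal (2 powr p * A) * hardy_rhs (L - {zpt}) d p (a + real d) u)"
      by (rule half_absorb[OF fin main[unfolded h]])
    also have "\<dots> = ennreal (2 * (2 powr p * A)) * hardy_rhs (L - {zpt}) d p (a + real d) u"
      using A0 by (simp add: ennreal_mult mult.assoc)
    finally show "hardy_lhs L d p a u \<le> ennreal (2 * (2 powr p * A)) * hardy_rhs (L - {zpt}) d p (a + real d) u" .
  qed
qed



lemma alg2:
  fixes a :: real and n K d :: nat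
  assumes n: "1 \<le> n" and d: "1 \<le> d" and K: "0 < K"
  shows "2*real d*(3*real n)^(d-1) * (real K^d / (real n powr a * real n^d))
       = 2*real d*3^(d-1)*real K^d * real n powr (-1-a)"
proof -
  obtain e where e: "d = Suc e" using d by (cases d) auto
  have n0: "0 < real n" using n by simp
  have "real n powr (-1-a) = inverse (real n powr (1+a))"
    by (subst powr_minus[symmetric]) simp
  also have "real n powr (1+a) = real n * real n powr a" using n0 by (simp add: powr_add)
  finally have pe: "real n powr (-1-a) = 1 / (real n * real n powr a)" by (simp add: divide_simps)
  show ?thesis unfolding pe e using n0 K
    by (simp add: power_mult_distrib field_simps)
qed

lemma nn_diff_le: "1 \<le> d \<Longrightarrow> nn d (\<lambda>i. j i - m i) \<le> nn d j + nn d m"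
proof -
  assume d: "1 \<le> d"
  have "\<forall>i<d. \<bar>j i - m i\<bar> \<le> int (nn d j + nn d m)"
  proof (intro allI impI)
    fix i assume "i < d"
    hence "\<bar>j i\<bar> \<le> int (nn d j)" "\<bar>m i\<bar> \<le> int (nn d m)" by (auto intro: nn_ge)
    thus "\<bar>j i - m i\<bar> \<le> int (nn d j + nn d m)" by linarith
  qed
  thus ?thesis using nn_le_iff[OF d] by blast
qed

lemma partB:
  fixes a p :: real
  assumes d: "1 \<le> d" and G: "good d L" and p: "0 < p" and ad: "real d < a"
  shows "\<exists>c::real. \<forall>u. u zpt = 0 \<longrightarrow>
     hardy_lhs L d p a u \<le> ennreal c * hardy_rhs L d p (a + real d) u"
proof -
  have a: "0 < a" using ad d by linarith
  define C where "C = 2 powr (1+a) / a"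
  define \<theta> where "\<theta> = 1 / (2 * 2 powr p)"
  have C0: "0 < C" using a by (simp add: C_def)
  have th0: "0 < \<theta>" by (simp add: \<theta>_def)
  define D0 where "D0 = 2*real d*3^(d-1) * C"
  have D0: "0 < D0" using d C0 by (simp add: D0_def)
  obtain K :: nat where K1: "1 \<le> K" and KB: "D0 * real K powr (real d - a) \<le> \<theta>"
    using unifB[OF ad th0 D0] by blast
  define A where "A = 2 powr (a + real d) * real K ^ d"
  have A0: "0 \<le> A" by (simp add: A_def)
  define c where "c = 2 * (2 powr p * A)"
  have LZ: "L \<subseteq> Zfull d" using G by (simp add: good_def)
  have zL: "zpt \<in> L" using G by (simp add: good_def)
  have ball_fin: "finite {m\<in>L. nn d m \<le> q}" for q using G by (simp add: good_def)
  have ball_card: "(q+1)^d \<le> card {m\<in>L. nn d m \<le> q}" for q using G by (simp add: good_def)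
  define W where "W j = supnorm d j powr a" for j
  define Kd where "Kd j m = supnorm d (\<lambda>i. j i - m i) powr (a + real d)" for j m
  have Wn: "W j = real (nn d j) powr a" for j by (simp add: W_def supnorm_nn[OF d])
  define T where "T j = {m\<in>L. nn d m \<le> nn d j div K}" for j
  have npos: "\<And>j. j \<in> L \<Longrightarrow> j \<noteq> zpt \<Longrightarrow> 1 \<le> nn d j" using good_nn_pos[OF d G] by auto
  have trunc: "(\<integral>\<^sup>+ j. ennreal (cmod (u j) powr p / W j) \<partial>count_space {j\<in>L - {zpt}. nn d j \<le> R})
      \<le> ennreal c * hardy_rhs L d p (a + real d) u" if u0: "u zpt = 0" for u R
  proof -
    define I where "I = {j\<in>L - {zpt}. nn d j \<le> R}"
    have IL: "I \<subseteq> L" by (auto simp: I_def)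
    have finI: "finite I" using ball_fin[of R] by (rule finite_subset[rotated]) (auto simp: I_def)
    have cI: "countable I" using finI by (rule countable_finite)
    have W0: "0 < W j" if "j \<in> I" for j
      using npos[of j] that by (auto simp: Wn I_def)
    have Kd0: "0 < Kd j m" if "j \<in> I" "m \<in> L" "m \<noteq> j" for j m
      using good_diff_pos[OF d G, of j m] that by (auto simp: Kd_def supnorm_nn[OF d] I_def)
    have TI: "finite (T j) \<and> T j \<noteq> {} \<and> T j \<subseteq> L" for j
    proof -
      have "finite (T j)" unfolding T_def by (rule ball_fin)
      moreover have "zpt \<in> T j" using zL nn_zpt[OF d] by (simp add: T_def)
      ultimately show ?thesis by (auto simp: T_def)
    qed
    have cardT: "real n \<le> real K * (real (n div K) + 1) \<and> (real (n div K) + 1) ^ d \<le> real (card (T j))"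
      if "n = nn d j" for j n
    proof
      have "n < K * (n div K + 1)" using K1
        by (metis div_mult_mod_eq add_mult_distrib2 mult.commute mod_less_divisor nat_add_left_cancel_less
              nat_mult_1_right less_le_trans order_refl not_le zero_less_one)
      hence "real n \<le> real (K * (n div K + 1))" by linarith
      thus "real n \<le> real K * (real (n div K) + 1)" by (simp add: algebra_simps)
      have "(n div K + 1)^d \<le> card (T j)" using ball_card[of "n div K"] that by (simp add: T_def)
      hence "real ((n div K + 1)^d) \<le> real (card (T j))" by linarith
      thus "(real (n div K) + 1) ^ d \<le> real (card (T j))" by (simp add: add.commute)
    qed
    have A1: "Kd j m \<le> A * (W j * card (T j))" if j: "j \<in> I" and m: "m \<in> T j" and ne: "m \<noteq> j" for j m
    proof -
      define n where "n = nn d j"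
      have n1: "1 \<le> n" using npos[of j] j by (auto simp: n_def I_def)
      have mn: "nn d m \<le> n" using m by (auto simp: T_def n_def intro: order_trans[OF _ div_le_dividend])
      have e: "nn d (\<lambda>i. j i - m i) \<le> 2 * n" using nn_diff_le[OF d, of j m] mn by (simp add: n_def)
      have n0: "0 < real n" using n1 by simp
      have "Kd j m = real (nn d (\<lambda>i. j i - m i)) powr (a + real d)"
        by (simp add: Kd_def supnorm_nn[OF d])
      also have "\<dots> \<le> real (2 * n) powr (a + real d)"
      proof (intro powr_mono2)
        show "real (nn d (\<lambda>i. j i - m i)) \<le> real (2 * n)" using e by (simp only: of_nat_le_iff)
      qed (use a in auto)
      also have "\<dots> = 2 powr (a + real d) * (real n powr a * real n ^ d)"
      proof -
        have "real (2 * n) powr (a + real d) = 2 powr (a + real d) * real n powr (a + real d)"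
          by (simp add: powr_mult)
        also have "real n powr (a + real d) = real n powr a * real n ^ d"
          using n0 by (simp add: powr_add powr_realpow)
        finally show ?thesis .
      qed
      also have "\<dots> \<le> 2 powr (a + real d) * (real n powr a * (real K ^ d * real (card (T j))))"
      proof -
        have "real n ^ d \<le> (real K * (real (n div K) + 1)) ^ d"
          using cardT[OF n_def] n0 by (intro power_mono) (auto simp: n_def)
        also have "\<dots> = real K ^ d * (real (n div K) + 1) ^ d" by (simp add: power_mult_distrib)
        also have "\<dots> \<le> real K ^ d * real (card (T j))"
          using cardT[OF n_def] by (intro mult_left_mono) (auto simp: n_def)
        finally have "real n ^ d \<le> real K ^ d * real (card (T j))" .
        thus ?thesis by (intro mult_left_mono) auto
      qed
      also have "\<dots> = A * (W j * card (T j))" by (simp add: A_def Wn n_def mult_ac)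
      finally show ?thesis .
    qed
    have A2: "ennreal (cmod (u m) powr p) *
      (\<integral>\<^sup>+ j. (if m \<in> T j then ennreal (1 / (W j * card (T j))) else 0) \<partial>count_space I)
      \<le> ennreal \<theta> * (if m \<in> I then ennreal (cmod (u m) powr p / W m) else 0)" if m: "m \<in> L" for m
    proof (cases "m = zpt")
      case True thus ?thesis using u0 p by simp
    next
      case mz: False
      define M where "M = nn d m"
      have M1: "1 \<le> M" using npos[OF m mz] by (simp add: M_def)
      show ?thesis
      proof (cases "M \<le> R")
        case False
        have "(\<integral>\<^sup>+ j. (if m \<in> T j then ennreal (1 / (W j * card (T j))) else 0) \<partial>count_space I) = 0"
        proof -
          have "(\<integral>\<^sup>+ j. (if m \<in> T j then ennreal (1 / (W j * card (T j))) else 0) \<partial>count_space I)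
              = (\<integral>\<^sup>+ j. 0 \<partial>count_space I)"
          proof (intro nn_integral_cong)
            fix j assume "j \<in> space (count_space I)"
            hence jR: "nn d j \<le> R" by (simp add: I_def)
            have "m \<notin> T j"
            proof
              assume "m \<in> T j"
              hence "nn d m \<le> nn d j div K" by (simp add: T_def)
              also have "\<dots> \<le> nn d j" by (rule div_le_dividend)
              finally show False using jR False by (simp add: M_def)
            qed
            thus "(if m \<in> T j then ennreal (1 / (W j * card (T j))) else 0) = 0" by simp
          qed
          thus ?thesis by simp
        qed
        thus ?thesis by simp
      next
        case True
        have mI: "m \<in> I" using True m mz by (simp add: I_def M_def)
        define N where "N = K * M"
        have N1: "1 \<le> N" using K1 M1 by (simp add: N_def)
        define g where "g n = real K ^ d / (real n powr a * real n ^ d)" for n :: nat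
        have g0: "0 \<le> g n" for n by (simp add: g_def)
        define Q where "Q = 2*real d*3^(d-1)*real K^d"
        have Q0: "0 \<le> Q" by (simp add: Q_def)
        have "(\<integral>\<^sup>+ j. (if m \<in> T j then ennreal (1 / (W j * card (T j))) else 0) \<partial>count_space I)
            \<le> (\<integral>\<^sup>+ j. (if N \<le> nn d j then ennreal (g (nn d j)) else 0) \<partial>count_space I)"
        proof (intro nn_integral_mono)
          fix j assume "j \<in> space (count_space I)"
          hence j: "j \<in> I" by simp
          define n where "n = nn d j"
          have n1: "1 \<le> n" using npos[of j] j by (auto simp: n_def I_def)
          show "(if m \<in> T j then ennreal (1 / (W j * card (T j))) else 0)
              \<le> (if N \<le> nn d j then ennreal (g (nn d j)) else 0)"
          proof (cases "m \<in> T j")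
            case True
            hence "M \<le> n div K" by (simp add: T_def M_def n_def)
            hence "K * M \<le> K * (n div K)" by simp
            also have "\<dots> \<le> n" by (simp add: mult.commute)
            finally have Nn: "N \<le> n" by (simp add: N_def)
            have n0: "0 < real n" using n1 by simp
            have pos: "0 < real n powr a * (real n / real K) ^ d" using n1 K1 by simp
            have "real n / real K \<le> real (n div K) + 1" using cardT[OF n_def] K1 by (simp add: divide_simps mult.commute)
            hence "(real n / real K) ^ d \<le> (real (n div K) + 1) ^ d"
              using n0 K1 by (intro power_mono) auto
            also have "\<dots> \<le> real (card (T j))" using cardT[OF n_def] by blast
            finally have "(real n / real K) ^ d \<le> real (card (T j))" .
            hence "real n powr a * (real n / real K) ^ d \<le> W j * card (T j)"
              by (simp add: Wn n_def) (intro mult_left_mono, auto)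
            hence "1 / (W j * card (T j)) \<le> 1 / (real n powr a * (real n / real K) ^ d)" using pos
              by (intro divide_left_mono) auto
            also have "\<dots> = g n" using K1 by (simp add: g_def power_divide)
            finally show ?thesis using True Nn by (simp add: n_def ennreal_leI)
          qed simp
        qed
        also have "\<dots> \<le> (\<integral>\<^sup>+ j. (if N \<le> nn d j then ennreal (g (nn d j)) else 0) \<partial>count_space L)"
          by (intro nn_count_mono IL)
        also have "\<dots> \<le> (\<Sum>n. if N \<le> n then ennreal (2*d*(3*n)^(d-1) * g n) else 0)"
          by (rule radial_sum[OF d G N1 g0])
        also have "\<dots> = (\<Sum>n. ennreal Q * (if N \<le> n then ennreal (real n powr (-1-a)) else 0))"
        proof (intro suminf_cong)
          fix n
          show "(if N \<le> n then ennreal (2*d*(3*n)^(d-1) * g n) else 0)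
              = ennreal Q * (if N \<le> n then ennreal (real n powr (-1-a)) else 0)"
          proof (cases "N \<le> n")
            case True
            hence "2*real d*(3*real n)^(d-1) * g n = Q * real n powr (-1-a)"
              unfolding g_def Q_def using alg2[of n d K a] N1 d K1 by simp
            thus ?thesis using True Q0 by (simp add: ennreal_mult')
          qed simp
        qed
        also have "\<dots> = ennreal Q * (\<Sum>n. if N \<le> n then ennreal (real n powr (-1-a)) else 0)"
          by (rule ennreal_suminf_cmult)
        also have "\<dots> \<le> ennreal Q * ennreal (C * real N powr (-a))"
          using tail_bound[OF a N1] by (intro mult_left_mono) (auto simp: C_def)
        also have "\<dots> \<le> ennreal (\<theta> / W m)"
        proof -
          have Mp: "0 < real M" using M1 by simp
          have Kp: "0 < real K" using K1 by simp
          have "real N powr (-a) = real K powr (-a) * real M powr (-a)" by (simp add: N_def powr_mult)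
          hence "Q * (C * real N powr (-a)) = (D0 * (real K ^ d * real K powr (-a))) * real M powr (-a)"
            by (simp add: Q_def D0_def mult_ac)
          also have "real K ^ d * real K powr (-a) = real K powr (real d - a)"
            using Kp by (simp add: powr_realpow[symmetric] powr_add[symmetric])
          also have "real M powr (-a) = 1 / real M powr a" by (simp add: powr_minus divide_simps)
          finally have "Q * (C * real N powr (-a)) = D0 * real K powr (real d - a) / real M powr a" by simp
          also have "\<dots> \<le> \<theta> / real M powr a" using KB Mp by (intro divide_right_mono) auto
          finally show ?thesis using Q0 C0 by (simp add: ennreal_mult'[symmetric] Wn M_def ennreal_leI)
        qed
        finally have int: "(\<integral>\<^sup>+ j. (if m \<in> T j then ennreal (1 / (W j * card (T j))) else 0) \<partial>count_space I)
            \<le> ennreal (\<theta> / W m)" .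
        have "ennreal (cmod (u m) powr p) *
            (\<integral>\<^sup>+ j. (if m \<in> T j then ennreal (1 / (W j * card (T j))) else 0) \<partial>count_space I)
            \<le> ennreal (cmod (u m) powr p) * ennreal (\<theta> / W m)"
          using int by (rule mult_left_mono) simp
        also have "\<dots> = ennreal \<theta> * ennreal (cmod (u m) powr p / W m)"
          using th0 W0[OF mI] by (simp add: ennreal_mult'[symmetric] mult.commute)
        finally show ?thesis using mI by simp
      qed
    qed
    define LR where "LR = (\<integral>\<^sup>+ j. ennreal (cmod (u j) powr p / W j) \<partial>count_space I)"
    define RR where "RR = (\<integral>\<^sup>+ j. (\<integral>\<^sup>+ m. ennreal (cmod (u j - u m) powr p / Kd j m)
            \<partial>count_space (L - {j})) \<partial>count_space I)"
    have main: "LR \<le> ennreal (2 powr p * A) * RR + ennreal (2 powr p * \<theta>) * LR"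
      unfolding LR_def RR_def
      using absorb[of I L p A \<theta> W Kd T u, OF cI IL p A0 _ W0 Kd0 _ A1 A2] th0 TI by auto
    have finLR: "LR < \<infinity>" unfolding LR_def using finI
      by (simp add: nn_integral_count_space_finite)
    have RRle: "RR \<le> hardy_rhs L d p (a + real d) u"
      unfolding RR_def hardy_rhs_def Kd_def by (rule nn_count_mono[OF IL])
    have h: "2 powr p * \<theta> = 1/2" by (simp add: \<theta>_def)
    have "LR \<le> 2 * (ennreal (2 powr p * A) * RR)"
      by (rule half_absorb[OF finLR main[unfolded h]])
    also have "\<dots> \<le> 2 * (ennreal (2 powr p * A) * hardy_rhs L d p (a + real d) u)"
      using RRle by (intro mult_left_mono) auto
    also have "\<dots> = ennreal c * hardy_rhs L d p (a + real d) u"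
      using A0 by (simp add: c_def ennreal_mult mult.assoc)
    finally show ?thesis unfolding LR_def I_def .
  qed
  show ?thesis
  proof (intro exI[of _ c] allI impI)
    fix u :: "(nat \<Rightarrow> int) \<Rightarrow> complex" assume u0: "u zpt = 0"
    define f where "f j = ennreal (cmod (u j) powr p / W j)" for j
    define F where "F R j = (if nn d j \<le> R then f j else 0)" for R :: nat and j
    have "hardy_lhs L d p a u = (\<integral>\<^sup>+ j. f j \<partial>count_space (L - {zpt}))"
      by (simp add: hardy_lhs_def f_def W_def)
    also have "\<dots> = (\<integral>\<^sup>+ j. (SUP R. F R j) \<partial>count_space (L - {zpt}))"
    proof (intro nn_integral_cong)
      fix j
      show "f j = (SUP R. F R j)"
      proof (rule antisym)
        show "f j \<le> (SUP R. F R j)" by (rule SUP_upper2[of "nn d j"]) (auto simp: F_def)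
        show "(SUP R. F R j) \<le> f j" by (rule SUP_least) (auto simp: F_def)
      qed
    qed
    also have "\<dots> = (SUP R. (\<integral>\<^sup>+ j. F R j \<partial>count_space (L - {zpt})))"
      by (intro nn_integral_monotone_convergence_SUP) (auto simp: incseq_def le_fun_def F_def)
    also have "\<dots> \<le> ennreal c * hardy_rhs L d p (a + real d) u"
    proof (rule SUP_least)
      fix R
      have "(\<integral>\<^sup>+ j. F R j \<partial>count_space (L - {zpt}))
          = (\<integral>\<^sup>+ j. f j \<partial>count_space {j\<in>L - {zpt}. nn d j \<le> R})"
        unfolding F_def
        by (subst nn_count_if[symmetric, of _ "L - {zpt}"]) (auto intro!: nn_integral_cong)
      also have "\<dots> \<le> ennreal c * hardy_rhs L d p (a + real d) u"
        using trunc[where u=u and R=R, OF u0] by (simp add: f_def)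
      finally show "(\<integral>\<^sup>+ j. F R j \<partial>count_space (L - {zpt})) \<le> ennreal c * hardy_rhs L d p (a + real d) u" .
    qed
    finally show "hardy_lhs L d p a u \<le> ennreal c * hardy_rhs L d p (a + real d) u" .
  qed
qed



lemma rhs_mono:
  assumes d: "1 \<le> d" and G: "good d L" and e: "0 \<le> \<epsilon>" and q: "0 \<le> q"
  shows "hardy_rhs L d p (q + \<epsilon>) u \<le> hardy_rhs L d p q u"
  unfolding hardy_rhs_def
proof (rule nn_integral_mono)
  fix j assume j: "j \<in> space (count_space L)"
  show "(\<integral>\<^sup>+ m. ennreal (cmod (u j - u m) powr p / supnorm d (\<lambda>i. j i - m i) powr (q + \<epsilon>)) \<partial>count_space (L - {j}))
     \<le> (\<integral>\<^sup>+ m. ennreal (cmod (u j - u m) powr p / supnorm d (\<lambda>i. j i - m i) powr q) \<partial>count_space (L - {j}))"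
  proof (rule nn_integral_mono, rule ennreal_leI)
    fix m assume m: "m \<in> space (count_space (L - {j}))"
    define s where "s = supnorm d (\<lambda>i. j i - m i)"
    have s1: "1 \<le> s" using good_diff_pos[OF d G, of j m] j m by (auto simp: s_def supnorm_nn[OF d])
    have "s powr q \<le> s powr (q + \<epsilon>)" using s1 e by (intro powr_mono) auto
    moreover have "0 < s powr q" using s1 by simp
    ultimately have "cmod (u j - u m) powr p / s powr (q + \<epsilon>) \<le> cmod (u j - u m) powr p / s powr q"
      by (intro divide_left_mono) auto
    thus "cmod (u j - u m) powr p / supnorm d (\<lambda>i. j i - m i) powr (q + \<epsilon>)
        \<le> cmod (u j - u m) powr p / supnorm d (\<lambda>i. j i - m i) powr q" unfolding s_def .
  qed
qed

lemma hardy_parts_good: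
  assumes G: "\<And>d. 1 \<le> d \<Longrightarrow> good d (D d)"
  shows "hardy_parts D"
  unfolding hardy_parts_def
proof (intro conjI allI impI)
  fix s p \<delta> :: real assume s: "0 < s" and p: "0 < p" and dl: "0 < \<delta>"
  have a: "0 < s * p" using s p by simp
  obtain c where c: "\<And>d L. 1 \<le> d \<Longrightarrow> good d L \<Longrightarrow> \<delta> \<le> real d - s * p \<Longrightarrow>
     (\<forall>u. hardy_lhs L d p (s * p) u < \<infinity> \<longrightarrow>
        hardy_lhs L d p (s * p) u \<le> ennreal c * hardy_rhs (L - {zpt}) d p (s * p + real d) u)"
    using partA[OF a p dl] by blast
  show "\<exists>c. \<forall>d. 1 \<le> d \<longrightarrow> s * p < real d \<longrightarrow> \<delta> \<le> real d - s * p \<longrightarrow>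
          (\<forall>u. hardy_lhs (D d) d p (s * p) u < \<infinity> \<longrightarrow>
             hardy_lhs (D d) d p (s * p) u \<le> ennreal c * hardy_rhs (D d - {zpt}) d p (s * p + real d) u)"
    using c G by blast
next
  fix d :: nat and s p \<epsilon> :: real
  assume d: "1 \<le> d" and s: "0 < s" and p: "0 < p" and sp: "s * p = real d" and e: "0 < \<epsilon>"
  have ad: "real d < s * p + \<epsilon>" using sp e by simp
  obtain c where c: "\<And>u. u zpt = 0 \<Longrightarrow>
     hardy_lhs (D d) d p (s * p + \<epsilon>) u \<le> ennreal c * hardy_rhs (D d) d p (s * p + \<epsilon> + real d) u"
    using partB[OF d G[OF d] p ad] by blast
  have eq: "s * p + \<epsilon> + real d = s * p + real d + \<epsilon>" by simp
  show "\<exists>c. \<forall>u. u zpt = 0 \<longrightarrow>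
          hardy_lhs (D d) d p (s * p + \<epsilon>) u \<le> ennreal c * hardy_rhs (D d) d p (s * p + real d + \<epsilon>) u \<and>
          ennreal c * hardy_rhs (D d) d p (s * p + real d + \<epsilon>) u \<le> ennreal c * hardy_rhs (D d) d p (s * p + real d) u"
  proof (intro exI[of _ c] allI impI conjI)
    fix u :: "(nat \<Rightarrow> int) \<Rightarrow> complex" assume u0: "u zpt = 0"
    show "hardy_lhs (D d) d p (s * p + \<epsilon>) u \<le> ennreal c * hardy_rhs (D d) d p (s * p + real d + \<epsilon>) u"
      using c[where u=u, OF u0] unfolding eq .
    have "hardy_rhs (D d) d p (s * p + real d + \<epsilon>) u \<le> hardy_rhs (D d) d p (s * p + real d) u"
      using s p e by (intro rhs_mono[OF d G[OF d]]) auto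
    thus "ennreal c * hardy_rhs (D d) d p (s * p + real d + \<epsilon>) u \<le> ennreal c * hardy_rhs (D d) d p (s * p + real d) u"
      by (rule mult_left_mono) simp
  qed
next
  fix d :: nat and s p :: real
  assume d: "1 \<le> d" and s: "0 < s" and p: "0 < p" and sp: "real d < s * p"
  show "\<exists>c. \<forall>u. u zpt = 0 \<longrightarrow>
          hardy_lhs (D d) d p (s * p) u \<le> ennreal c * hardy_rhs (D d) d p (s * p + real d) u"
    using partB[OF d G[OF d] p sp] by blast
qed

theorem theorem1p2:
  shows "hardy_parts Zplus \<and> hardy_parts Zfull"
  using hardy_parts_good[of Zplus, OF good_plus] hardy_parts_good[of Zfull, OF good_full] by blast


end
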